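(* Let $0\le\alpha\le2$, $1+\mu>0$ and $\gamma>0$. There is a constant $C$, depending only on lower bounds for $\gamma$ and $1+\mu$, such that for every $u\in C^1_0([0,\infty))$ and every $t\ge0$, $$\int_0^t\frac{u^2}{(1+|r-t|)^{2+\mu}}\frac{r^2\,dr}{(1+t+r)^\alpha}+\int_t^\infty\frac{u^2}{(1+|r-t|)^{1-\gamma}}\frac{r^2\,dr}{(1+t+r)^\alpha}\le C\int_0^t\frac{|\partial_ru|^2}{(1+|r-t|)^\mu}\frac{r^2\,dr}{(1+t+r)^\alpha}+C\int_t^\infty|\partial_ru|^2\frac{(1+|r-t|)^{1+\gamma}}{(1+t+r)^\alpha}r^2\,dr .$$
   Context: $C^1_0([0,\infty))$ denotes continuously differentiable functions on $[0,\infty)$ with compact support (not necessarily vanishing at $r=0$). *)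

theory Defs
  imports "HOL-Analysis.Analysis"
begin

definition C1_0_halfline :: "(real \<Rightarrow> real) \<Rightarrow> (real \<Rightarrow> real) \<Rightarrow> bool" where
  "C1_0_halfline u u' \<longleftrightarrow>
     (\<forall>r\<ge>0. (u has_real_derivative u' r) (at r within {0..})) \<and>
     continuous_on {0..} u' \<and>
     (\<exists>R. \<forall>r\<ge>R. u r = 0)"

end

theory Submission
  imports Defs
begin

lemma ftc_lower:
  fixes F F' g :: "real \<Rightarrow> real"
  assumes "a \<le> b"
    and d: "\<And>x. x \<in> {a..b} \<Longrightarrow> (F has_real_derivative F' x) (at x within {a..b})"
    and g: "continuous_on {a..b} g"
    and le: "\<And>x. x \<in> {a..b} \<Longrightarrow> g x \<le> F' x"
  shows "integral {a..b} g \<le> F b - F a"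
proof -
  have "(F' has_integral (F b - F a)) {a..b}"
    using assms(1) d by (intro fundamental_theorem_of_calculus)
      (auto simp: has_real_derivative_iff_has_vector_derivative)
  moreover have "(g has_integral integral {a..b} g) {a..b}"
    using integrable_continuous_interval[OF g] by (simp add: has_integral_integral)
  ultimately show ?thesis using le by (meson has_integral_le)
qed

lemma key_alg:
  fixes c q W E x u y :: real
  assumes "c > 0" "q \<ge> 0" "W \<ge> 0" "E \<ge> 0"
  shows "c/2*(u^2)*q*W - 2/c*(y^2)*((x^2)*q)*W \<le> 2*u*y*(x*q)*W + (u^2)*(c*q)*W + E"
proof -
  have sq: "c/2*(u^2) + 2*u*y*x + 2/c*(y^2)*(x^2) = c/2*(u + 2*y*x/c)\<^sup>2"
    using assms(1) by (simp add: field_simps power2_eq_square)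
  have "0 \<le> q*W*(c/2*(u + 2*y*x/c)\<^sup>2) + E" using assms by simp
  also have "\<dots> = q*W*(c/2*(u^2) + 2*u*y*x + 2/c*(y^2)*(x^2)) + E" by (simp only: sq)
  also have "q*W*(c/2*(u^2) + 2*u*y*x + 2/c*(y^2)*(x^2)) + E =
     2*u*y*(x*q)*W + (u^2)*(c*q)*W + E - (c/2*(u^2)*q*W - 2/c*(y^2)*((x^2)*q)*W)"
    using assms(1) by (simp add: field_simps)
  finally show ?thesis by linarith
qed

lemma powr_chain:
  fixes g :: "real \<Rightarrow> real"
  assumes "(g has_real_derivative g') (at x within S)" "g x > 0"
  shows "((\<lambda>r. g r powr p) has_real_derivative (p * g x powr (p - 1) * g')) (at x within S)"
  using DERIV_chain2[OF has_real_derivative_powr[OF assms(2)] assms(1)] by simp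

lemma W_deriv:
  fixes t \<alpha> r :: real
  assumes "t \<ge> 0" "r \<ge> 0" "\<alpha> \<le> 2"
  shows "((\<lambda>r. r\<^sup>2 * (1+t+r) powr (-\<alpha>)) has_real_derivative
      (2*r*(1+t+r) powr (-\<alpha>) + r\<^sup>2 * (-\<alpha> * (1+t+r) powr (-\<alpha>-1) * 1))) (at r within S)"
    and "2*r*(1+t+r) powr (-\<alpha>) + r\<^sup>2 * (-\<alpha> * (1+t+r) powr (-\<alpha>-1) * 1) \<ge> 0"
proof -
  have p: "1+t+r > 0" using assms by simp
  have d1: "((\<lambda>r. 1+t+r) has_real_derivative 1) (at r within S)"
    by (auto intro!: derivative_eq_intros)
  have d2: "((\<lambda>r. r\<^sup>2) has_real_derivative 2*r) (at r within S)"
    by (auto intro!: derivative_eq_intros)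
  show "((\<lambda>r. r\<^sup>2 * (1+t+r) powr (-\<alpha>)) has_real_derivative
      (2*r*(1+t+r) powr (-\<alpha>) + r\<^sup>2 * (-\<alpha> * (1+t+r) powr (-\<alpha>-1) * 1))) (at r within S)"
    using DERIV_mult[OF d2 powr_chain[OF d1 p, of "-\<alpha>"]] by (simp add: algebra_simps)
  have e: "(1+t+r) powr (-\<alpha>) = (1+t+r) * (1+t+r) powr (-\<alpha>-1)"
    using p by (simp add: powr_add[symmetric] powr_mult_base)
  have q: "(1+t+r) powr (-\<alpha>-1) \<ge> 0" by simp
  have "r * (2*(1+t+r) - \<alpha>*r) \<ge> 0" using assms
    using mult_right_mono[OF assms(3) assms(2)] by (intro mult_nonneg_nonneg) auto
  hence "(1+t+r) powr (-\<alpha>-1) * (r * (2*(1+t+r) - \<alpha>*r)) \<ge> 0" using q by simp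
  thus "2*r*(1+t+r) powr (-\<alpha>) + r\<^sup>2 * (-\<alpha> * (1+t+r) powr (-\<alpha>-1) * 1) \<ge> 0"
    unfolding e by (simp add: algebra_simps power2_eq_square)
qed


lemma C1_facts:
  assumes "C1_0_halfline u u'"
  shows "\<And>r. r \<ge> 0 \<Longrightarrow> (u has_real_derivative u' r) (at r within {0..})"
    and "continuous_on {0..} u" and "continuous_on {0..} u'"
    and "\<exists>R\<ge>0. \<forall>r\<ge>R. u r = 0 \<and> u' r = 0"
proof -
  show d: "\<And>r. r \<ge> 0 \<Longrightarrow> (u has_real_derivative u' r) (at r within {0..})"
    using assms unfolding C1_0_halfline_def by auto
  show "continuous_on {0..} u'" using assms unfolding C1_0_halfline_def by auto
  show "continuous_on {0..} u"
    using d by (intro has_derivative_continuous_on[of _ _ "\<lambda>r. (*) (u' r)"])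
      (auto simp: has_field_derivative_def)
  obtain R0 where R0: "\<forall>r\<ge>R0. u r = 0" using assms unfolding C1_0_halfline_def by auto
  define R where "R = max R0 0 + 1"
  have "u' r = 0" if "r \<ge> R" for r
  proof -
    have rpos: "r > 0" "r > R0" using that by (auto simp: R_def)
    have "(u has_real_derivative u' r) (at r)"
      using d[of r] rpos at_within_interior[of r "{0..}"] by simp
    moreover have "(u has_real_derivative 0) (at r)"
    proof -
      have ev: "eventually (\<lambda>x. (\<lambda>_. 0::real) x = u x) (nhds r)"
        using eventually_nhds_in_open[of "{R0<..}" r] rpos
        by (auto elim!: eventually_mono simp: R0)
      have "((\<lambda>_. 0::real) has_real_derivative 0) (at r)" by simp
      thus ?thesis using DERIV_cong_ev[OF refl ev refl] by simp
    qed
    ultimately show ?thesis using DERIV_unique by blast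
  qed
  thus "\<exists>R\<ge>0. \<forall>r\<ge>R. u r = 0 \<and> u' r = 0"
    using R0 by (intro exI[of _ R]) (auto simp: R_def)
qed


lemma outer:
  fixes u u' :: "real \<Rightarrow> real" and t \<alpha> \<gamma> :: real
  assumes g0: "\<gamma> > 0" and a0: "0 \<le> \<alpha>" and a2: "\<alpha> \<le> 2" and C1: "C1_0_halfline u u'" and t0: "t \<ge> 0"
  shows "\<gamma>/2 * (LINT r:{t..}|lborel. (u r)\<^sup>2 / (1 + \<bar>r - t\<bar>) powr (1 - \<gamma>) * r\<^sup>2 / (1 + t + r) powr \<alpha>)
     + (u t)\<^sup>2 * (t\<^sup>2 * (1+t+t) powr (-\<alpha>))
     \<le> 2/\<gamma> * (LINT r:{t..}|lborel. (u' r)\<^sup>2 * (1 + \<bar>r - t\<bar>) powr (1 + \<gamma>) / (1 + t + r) powr \<alpha> * r\<^sup>2)"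
proof -
  note d = C1_facts(1)[OF C1]
  have cu: "continuous_on {t..R} u" and cu': "continuous_on {t..R} u'" for R
    using C1_facts(2,3)[OF C1] t0 by (auto intro: continuous_on_subset)
  obtain R0 where R0: "R0 \<ge> 0" "\<forall>r\<ge>R0. u r = 0 \<and> u' r = 0" using C1_facts(4)[OF C1] by blast
  define R where "R = max R0 t"
  have tR: "t \<le> R" and Rz: "\<And>r. r \<ge> R \<Longrightarrow> u r = 0 \<and> u' r = 0" using R0 by (auto simp: R_def)
  define W where "W r = r\<^sup>2 * (1+t+r) powr (-\<alpha>)" for r
  define a where "a r = (u r)\<^sup>2 * (1+r-t) powr (\<gamma>-1) * W r" for r
  define b where "b r = (u' r)\<^sup>2 * (1+r-t) powr (1+\<gamma>) * W r" for r
  have cW: "continuous_on {t..R} W" unfolding W_def using t0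
    by (auto intro!: continuous_intros)
  have ca: "continuous_on {t..R} a" unfolding a_def using t0
    by (auto intro!: continuous_intros cu cW)
  have cb: "continuous_on {t..R} b" unfolding b_def using t0
    by (auto intro!: continuous_intros cu' cW)
  have eqA: "(LINT r:{t..}|lborel. (u r)\<^sup>2 / (1 + \<bar>r - t\<bar>) powr (1 - \<gamma>) * r\<^sup>2 / (1 + t + r) powr \<alpha>)
     = integral {t..R} a"
  proof -
    have "(\<lambda>r. indicator {t..} r *\<^sub>R ((u r)\<^sup>2 / (1 + \<bar>r - t\<bar>) powr (1 - \<gamma>) * r\<^sup>2 / (1 + t + r) powr \<alpha>))
       = (\<lambda>r. indicator {t..R} r *\<^sub>R a r)"
    proof
      fix r
      show "indicator {t..} r *\<^sub>R ((u r)\<^sup>2 / (1 + \<bar>r - t\<bar>) powr (1 - \<gamma>) * r\<^sup>2 / (1 + t + r) powr \<alpha>)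
         = indicator {t..R} r *\<^sub>R a r"
      proof (cases "t \<le> r \<and> r \<le> R")
        case True
        have "(1+r-t) powr (\<gamma>-1) = 1 / (1+r-t) powr (1-\<gamma>)"
          using powr_minus_divide[of "1+r-t" "1-\<gamma>"] by simp
        moreover have "(1+t+r) powr (-\<alpha>) = 1 / (1+t+r) powr \<alpha>"
          using powr_minus_divide[of "1+t+r" "\<alpha>"] by simp
        ultimately show ?thesis using True by (simp add: a_def W_def indicator_def add_diff_eq)
      next
        case False
        then show ?thesis using Rz[of r] by (auto simp: a_def indicator_def)
      qed
    qed
    hence "(LINT r:{t..}|lborel. (u r)\<^sup>2 / (1 + \<bar>r - t\<bar>) powr (1 - \<gamma>) * r\<^sup>2 / (1 + t + r) powr \<alpha>)
       = (LINT r:{t..R}|lborel. a r)" unfolding set_lebesgue_integral_def by simp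
    also have "\<dots> = integral {t..R} a"
      by (rule set_borel_integral_eq_integral(2)[OF borel_integrable_atLeastAtMost'[OF ca]])
    finally show ?thesis .
  qed
  have eqB: "(LINT r:{t..}|lborel. (u' r)\<^sup>2 * (1 + \<bar>r - t\<bar>) powr (1 + \<gamma>) / (1 + t + r) powr \<alpha> * r\<^sup>2)
     = integral {t..R} b"
  proof -
    have "(\<lambda>r. indicator {t..} r *\<^sub>R ((u' r)\<^sup>2 * (1 + \<bar>r - t\<bar>) powr (1 + \<gamma>) / (1 + t + r) powr \<alpha> * r\<^sup>2))
       = (\<lambda>r. indicator {t..R} r *\<^sub>R b r)"
    proof
      fix r
      show "indicator {t..} r *\<^sub>R ((u' r)\<^sup>2 * (1 + \<bar>r - t\<bar>) powr (1 + \<gamma>) / (1 + t + r) powr \<alpha> * r\<^sup>2)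
         = indicator {t..R} r *\<^sub>R b r"
      proof (cases "t \<le> r \<and> r \<le> R")
        case True
        have "(1+t+r) powr (-\<alpha>) = 1 / (1+t+r) powr \<alpha>"
          using powr_minus_divide[of "1+t+r" "\<alpha>"] by simp
        then show ?thesis using True by (simp add: b_def W_def indicator_def add_diff_eq)
      next
        case False
        then show ?thesis using Rz[of r] by (auto simp: b_def indicator_def)
      qed
    qed
    hence "(LINT r:{t..}|lborel. (u' r)\<^sup>2 * (1 + \<bar>r - t\<bar>) powr (1 + \<gamma>) / (1 + t + r) powr \<alpha> * r\<^sup>2)
       = (LINT r:{t..R}|lborel. b r)" unfolding set_lebesgue_integral_def by simp
    also have "\<dots> = integral {t..R} b"
      by (rule set_borel_integral_eq_integral(2)[OF borel_integrable_atLeastAtMost'[OF cb]])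
    finally show ?thesis .
  qed
  define W' where "W' r = 2*r*(1+t+r) powr (-\<alpha>) + r\<^sup>2 * (-\<alpha> * (1+t+r) powr (-\<alpha>-1) * 1)" for r
  define F where "F r = (u r)\<^sup>2 * (1+r-t) powr \<gamma> * W r" for r
  define F' where "F' r = (of_nat 2 * (u' r * u r ^ (2 - Suc 0)) * (1+r-t) powr \<gamma>
       + (\<gamma> * (1+r-t) powr (\<gamma> - 1) * 1) * (u r)\<^sup>2) * W r + W' r * ((u r)\<^sup>2 * (1+r-t) powr \<gamma>)" for r
  have dF: "(F has_real_derivative F' r) (at r within {t..R})" if r: "r \<in> {t..R}" for r
  proof -
    have r0: "r \<ge> 0" using r t0 by auto
    have dU: "(u has_real_derivative u' r) (at r within {t..R})"
      using DERIV_subset[OF d[OF r0]] t0 by auto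
    note dU2 = DERIV_power[OF dU, of 2]
    have dl: "((\<lambda>r. 1+r-t) has_real_derivative 1) (at r within {t..R})"
      by (auto intro!: derivative_eq_intros)
    note dP = powr_chain[OF dl, of \<gamma>]
    have dW: "(W has_real_derivative W' r) (at r within {t..R})"
      unfolding W_def W'_def using W_deriv(1)[OF t0 r0 a2] .
    have "1 + r - t > 0" using r by auto
    from DERIV_mult[OF DERIV_mult[OF dU2 dP[OF this]] dW]
    show ?thesis unfolding F_def F'_def by simp
  qed
  have le: "\<gamma>/2 * a r - 2/\<gamma> * b r \<le> F' r" if r: "r \<in> {t..R}" for r
  proof -
    have r0: "r \<ge> 0" using r t0 by auto
    define x where "x = 1+r-t"
    have x0: "x > 0" using r by (auto simp: x_def)
    define q where "q = x powr (\<gamma>-1)"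
    have q0: "q \<ge> 0" by (simp add: q_def)
    have W0: "W r \<ge> 0" by (simp add: W_def)
    have W'0: "W' r \<ge> 0" unfolding W'_def using W_deriv(2)[OF t0 r0 a2] .
    have E0: "W' r * ((u r)\<^sup>2 * x powr \<gamma>) \<ge> 0" using W'0 by simp
    have p1: "x powr \<gamma> = x * q" unfolding q_def using x0
      by (simp add: powr_mult_base)
    have p2: "x powr (1+\<gamma>) = x^2 * q"
    proof -
      have "x powr (1+\<gamma>) = x powr (2 + (\<gamma>-1))" by simp
      also have "\<dots> = x powr 2 * x powr (\<gamma>-1)" by (rule powr_add)
      finally show ?thesis using x0 by (simp add: powr_numeral q_def)
    qed
    have "\<gamma>/2*(u r)^2*q*W r - 2/\<gamma>*(u' r)^2*(x^2*q)*W r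
          \<le> 2*u r*u' r*(x*q)*W r + (u r)^2*(\<gamma>*q)*W r + W' r * ((u r)\<^sup>2 * x powr \<gamma>)"
      by (rule key_alg[OF g0 q0 W0 E0])
    thus ?thesis unfolding a_def b_def F'_def x_def[symmetric] q_def[symmetric] p1 p2
      by (simp add: algebra_simps power2_eq_square)
  qed
  have cg: "continuous_on {t..R} (\<lambda>r. \<gamma>/2 * a r - 2/\<gamma> * b r)"
    by (intro continuous_intros ca cb)
  have I: "integral {t..R} (\<lambda>r. \<gamma>/2 * a r - 2/\<gamma> * b r) \<le> F R - F t"
    by (rule ftc_lower[OF tR dF cg le])
  have "integral {t..R} (\<lambda>r. \<gamma>/2 * a r - 2/\<gamma> * b r) = \<gamma>/2 * integral {t..R} a - 2/\<gamma> * integral {t..R} b"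
  proof -
    have "(\<lambda>r. \<gamma>/2 * a r) integrable_on {t..R}" "(\<lambda>r. 2/\<gamma> * b r) integrable_on {t..R}"
      by (intro integrable_continuous_interval continuous_intros ca cb)+
    from integral_diff[OF this] show ?thesis by (simp only: integral_mult_right)
  qed
  moreover have "F R = 0" using Rz[of R] by (simp add: F_def)
  moreover have "F t = (u t)\<^sup>2 * (t\<^sup>2 * (1+t+t) powr (-\<alpha>))" by (simp add: F_def W_def)
  ultimately show ?thesis using I unfolding eqA eqB by linarith
qed


lemma inner:
  fixes u u' :: "real \<Rightarrow> real" and t \<alpha> \<mu> :: real
  assumes m0: "1 + \<mu> > 0" and a0: "0 \<le> \<alpha>" and a2: "\<alpha> \<le> 2" and C1: "C1_0_halfline u u'" and t0: "t \<ge> 0"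
  shows "(1+\<mu>)/2 * (LINT r:{0..t}|lborel. (u r)\<^sup>2 / (1 + \<bar>r - t\<bar>) powr (2 + \<mu>) * r\<^sup>2 / (1 + t + r) powr \<alpha>)
     - 2/(1+\<mu>) * (LINT r:{0..t}|lborel. (u' r)\<^sup>2 / (1 + \<bar>r - t\<bar>) powr \<mu> * r\<^sup>2 / (1 + t + r) powr \<alpha>)
     \<le> (u t)\<^sup>2 * (t\<^sup>2 * (1+t+t) powr (-\<alpha>))"
proof -
  note d = C1_facts(1)[OF C1]
  have cu: "continuous_on {0..t} u" and cu': "continuous_on {0..t} u'"
    using C1_facts(2,3)[OF C1] by (auto intro: continuous_on_subset)
  define W where "W r = r\<^sup>2 * (1+t+r) powr (-\<alpha>)" for r
  define a where "a r = (u r)\<^sup>2 * (1+t-r) powr (-(2+\<mu>)) * W r" for r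
  define b where "b r = (u' r)\<^sup>2 * (1+t-r) powr (-\<mu>) * W r" for r
  have cW: "continuous_on {0..t} W" unfolding W_def using t0
    by (auto intro!: continuous_intros)
  have ca: "continuous_on {0..t} a" unfolding a_def using t0
    by (auto intro!: continuous_intros cu cW)
  have cb: "continuous_on {0..t} b" unfolding b_def using t0
    by (auto intro!: continuous_intros cu' cW)
  have eqA: "(LINT r:{0..t}|lborel. (u r)\<^sup>2 / (1 + \<bar>r - t\<bar>) powr (2 + \<mu>) * r\<^sup>2 / (1 + t + r) powr \<alpha>)
     = integral {0..t} a"
  proof -
    have "(\<lambda>r. indicator {0..t} r *\<^sub>R ((u r)\<^sup>2 / (1 + \<bar>r - t\<bar>) powr (2 + \<mu>) * r\<^sup>2 / (1 + t + r) powr \<alpha>))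
       = (\<lambda>r. indicator {0..t} r *\<^sub>R a r)"
    proof
      fix r
      show "indicator {0..t} r *\<^sub>R ((u r)\<^sup>2 / (1 + \<bar>r - t\<bar>) powr (2 + \<mu>) * r\<^sup>2 / (1 + t + r) powr \<alpha>)
         = indicator {0..t} r *\<^sub>R a r"
      proof (cases "0 \<le> r \<and> r \<le> t")
        case True
        have "(1+t-r) powr (-(2+\<mu>)) = 1 / (1+t-r) powr (2+\<mu>)"
          using powr_minus_divide[of "1+t-r" "2+\<mu>"] by simp
        moreover have "(1+t+r) powr (-\<alpha>) = 1 / (1+t+r) powr \<alpha>"
          using powr_minus_divide[of "1+t+r" "\<alpha>"] by simp
        moreover have "\<bar>r - t\<bar> = t - r" using True by simp
        ultimately show ?thesis using True by (simp add: a_def W_def indicator_def add_diff_eq)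
      next
        case False
        then show ?thesis by (auto simp: indicator_def)
      qed
    qed
    hence "(LINT r:{0..t}|lborel. (u r)\<^sup>2 / (1 + \<bar>r - t\<bar>) powr (2 + \<mu>) * r\<^sup>2 / (1 + t + r) powr \<alpha>)
       = (LINT r:{0..t}|lborel. a r)" unfolding set_lebesgue_integral_def by simp
    also have "\<dots> = integral {0..t} a"
      by (rule set_borel_integral_eq_integral(2)[OF borel_integrable_atLeastAtMost'[OF ca]])
    finally show ?thesis .
  qed
  have eqB: "(LINT r:{0..t}|lborel. (u' r)\<^sup>2 / (1 + \<bar>r - t\<bar>) powr \<mu> * r\<^sup>2 / (1 + t + r) powr \<alpha>)
     = integral {0..t} b"
  proof -
    have "(\<lambda>r. indicator {0..t} r *\<^sub>R ((u' r)\<^sup>2 / (1 + \<bar>r - t\<bar>) powr \<mu> * r\<^sup>2 / (1 + t + r) powr \<alpha>))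
       = (\<lambda>r. indicator {0..t} r *\<^sub>R b r)"
    proof
      fix r
      show "indicator {0..t} r *\<^sub>R ((u' r)\<^sup>2 / (1 + \<bar>r - t\<bar>) powr \<mu> * r\<^sup>2 / (1 + t + r) powr \<alpha>)
         = indicator {0..t} r *\<^sub>R b r"
      proof (cases "0 \<le> r \<and> r \<le> t")
        case True
        have "(1+t-r) powr (-\<mu>) = 1 / (1+t-r) powr \<mu>"
          using powr_minus_divide[of "1+t-r" "\<mu>"] by simp
        moreover have "(1+t+r) powr (-\<alpha>) = 1 / (1+t+r) powr \<alpha>"
          using powr_minus_divide[of "1+t+r" "\<alpha>"] by simp
        moreover have "\<bar>r - t\<bar> = t - r" using True by simp
        ultimately show ?thesis using True by (simp add: b_def W_def indicator_def add_diff_eq)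
      next
        case False
        then show ?thesis by (auto simp: indicator_def)
      qed
    qed
    hence "(LINT r:{0..t}|lborel. (u' r)\<^sup>2 / (1 + \<bar>r - t\<bar>) powr \<mu> * r\<^sup>2 / (1 + t + r) powr \<alpha>)
       = (LINT r:{0..t}|lborel. b r)" unfolding set_lebesgue_integral_def by simp
    also have "\<dots> = integral {0..t} b"
      by (rule set_borel_integral_eq_integral(2)[OF borel_integrable_atLeastAtMost'[OF cb]])
    finally show ?thesis .
  qed
  define W' where "W' r = 2*r*(1+t+r) powr (-\<alpha>) + r\<^sup>2 * (-\<alpha> * (1+t+r) powr (-\<alpha>-1) * 1)" for r
  define F where "F r = (u r)\<^sup>2 * (1+t-r) powr (-(1+\<mu>)) * W r" for r
  define F' where "F' r = (of_nat 2 * (u' r * u r ^ (2 - Suc 0)) * (1+t-r) powr (-(1+\<mu>))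
       + (-(1+\<mu>) * (1+t-r) powr (-(1+\<mu>) - 1) * (-1)) * (u r)\<^sup>2) * W r
       + W' r * ((u r)\<^sup>2 * (1+t-r) powr (-(1+\<mu>)))" for r
  have dF: "(F has_real_derivative F' r) (at r within {0..t})" if r: "r \<in> {0..t}" for r
  proof -
    have r0: "r \<ge> 0" using r by auto
    have dU: "(u has_real_derivative u' r) (at r within {0..t})"
      using DERIV_subset[OF d[OF r0]] by auto
    note dU2 = DERIV_power[OF dU, of 2]
    have dl: "((\<lambda>r. 1+t-r) has_real_derivative -1) (at r within {0..t})"
      by (auto intro!: derivative_eq_intros)
    note dP = powr_chain[OF dl, of "-(1+\<mu>)"]
    have dW: "(W has_real_derivative W' r) (at r within {0..t})"
      unfolding W_def W'_def using W_deriv(1)[OF t0 r0 a2] .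
    have "1 + t - r > 0" using r by auto
    from DERIV_mult[OF DERIV_mult[OF dU2 dP[OF this]] dW]
    show ?thesis unfolding F_def F'_def by simp
  qed
  have le: "(1+\<mu>)/2 * a r - 2/(1+\<mu>) * b r \<le> F' r" if r: "r \<in> {0..t}" for r
  proof -
    have r0: "r \<ge> 0" using r t0 by auto
    define x where "x = 1+t-r"
    have x0: "x > 0" using r by (auto simp: x_def)
    define q where "q = x powr (-(2+\<mu>))"
    have q0: "q \<ge> 0" by (simp add: q_def)
    have W0: "W r \<ge> 0" by (simp add: W_def)
    have W'0: "W' r \<ge> 0" unfolding W'_def using W_deriv(2)[OF t0 r0 a2] .
    have E0: "W' r * ((u r)\<^sup>2 * x powr (-(1+\<mu>))) \<ge> 0" using W'0 by simp
    have p0: "x powr (-(1+\<mu>) - 1) = q" unfolding q_def by (simp add: algebra_simps)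
    have p1: "x powr (-(1+\<mu>)) = x * q"
    proof -
      have "x powr (-(1+\<mu>)) = x powr (1 + (-(2+\<mu>)))" by simp
      also have "\<dots> = x powr 1 * x powr (-(2+\<mu>))" by (rule powr_add)
      finally show ?thesis using x0 by (simp add: q_def)
    qed
    have p2: "x powr (-\<mu>) = x^2 * q"
    proof -
      have "x powr (-\<mu>) = x powr (2 + (-(2+\<mu>)))" by simp
      also have "\<dots> = x powr 2 * x powr (-(2+\<mu>))" by (rule powr_add)
      finally show ?thesis using x0 by (simp add: powr_numeral q_def)
    qed
    have "(1+\<mu>)/2*(u r)^2*q*W r - 2/(1+\<mu>)*(u' r)^2*(x^2*q)*W r
          \<le> 2*u r*u' r*(x*q)*W r + (u r)^2*((1+\<mu>)*q)*W r + W' r * ((u r)\<^sup>2 * x powr (-(1+\<mu>)))"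
      by (rule key_alg[OF m0 q0 W0 E0])
    thus ?thesis unfolding a_def b_def F'_def x_def[symmetric] q_def[symmetric] p0 p1 p2
      by (simp add: algebra_simps power2_eq_square)
  qed
  have cg: "continuous_on {0..t} (\<lambda>r. (1+\<mu>)/2 * a r - 2/(1+\<mu>) * b r)"
    by (intro continuous_intros ca cb)
  have I: "integral {0..t} (\<lambda>r. (1+\<mu>)/2 * a r - 2/(1+\<mu>) * b r) \<le> F t - F 0"
    by (rule ftc_lower[OF t0 dF cg le])
  have "integral {0..t} (\<lambda>r. (1+\<mu>)/2 * a r - 2/(1+\<mu>) * b r)
      = (1+\<mu>)/2 * integral {0..t} a - 2/(1+\<mu>) * integral {0..t} b"
  proof -
    have "(\<lambda>r. (1+\<mu>)/2 * a r) integrable_on {0..t}" "(\<lambda>r. 2/(1+\<mu>) * b r) integrable_on {0..t}"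
      by (intro integrable_continuous_interval continuous_intros ca cb)+
    from integral_diff[OF this] show ?thesis by (simp only: integral_mult_right)
  qed
  moreover have "F 0 = 0" by (simp add: F_def W_def)
  moreover have "F t = (u t)\<^sup>2 * (t\<^sup>2 * (1+t+t) powr (-\<alpha>))" by (simp add: F_def W_def)
  ultimately show ?thesis using I unfolding eqA eqB by linarith
qed

lemma lint_nonneg:
  fixes f :: "'a \<Rightarrow> real"
  assumes "\<And>x. x \<in> A \<Longrightarrow> 0 \<le> f x"
  shows "0 \<le> (LINT x:A|M. f x)"
  unfolding set_lebesgue_integral_def
  by (rule Bochner_Integration.integral_nonneg) (simp add: indicator_def assms)

lemma half_div: fixes c A X :: real assumes "c > 0" "c/2*A \<le> X" shows "A \<le> 2/c*X"
proof -
  have "A = 2/c*(c/2*A)" using assms(1) by simp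
  also have "\<dots> \<le> 2/c*X" using assms by (intro mult_left_mono) auto
  finally show ?thesis .
qed

lemma final_alg:
  fixes Ai Ao Bi Bo K g m g0 m0 :: real
  assumes g0: "g0 > 0" and m0: "m0 > 0" and g: "g0 \<le> g" and m: "m0 \<le> m"
    and O: "g/2*Ao + K \<le> 2/g*Bo" and In: "m/2*Ai - 2/m*Bi \<le> K"
    and K0: "K \<ge> 0" and Bi0: "Bi \<ge> 0" and Bo0: "Bo \<ge> 0" and Ao0: "Ao \<ge> 0"
  shows "Ai + Ao \<le> (4/g0^2 + 4/(m0*g0) + 4/m0^2) * Bi + (4/g0^2 + 4/(m0*g0) + 4/m0^2) * Bo"
proof -
  have gp: "g > 0" "m > 0" using g g0 m m0 by auto
  have "g/2*Ao \<le> 2/g*Bo" using O K0 by linarith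
  hence "Ao \<le> 2/g*(2/g*Bo)" by (rule half_div[OF gp(1)])
  also have "\<dots> = (2/g)*(2/g)*Bo" by simp
  also have "\<dots> \<le> (2/g0)*(2/g0)*Bo"
    using g g0 gp Bo0 by (intro mult_right_mono mult_mono divide_left_mono) auto
  finally have h1: "Ao \<le> 4/g0^2*Bo" by (simp add: power2_eq_square)
  have "g/2*Ao \<ge> 0" using gp Ao0 by simp
  hence "K \<le> 2/g*Bo" using O by linarith
  also have "\<dots> \<le> 2/g0*Bo" using g g0 Bo0 by (intro mult_right_mono divide_left_mono) auto
  finally have h2: "K \<le> 2/g0*Bo" .
  have "m/2*Ai \<le> 2/g0*Bo + 2/m*Bi" using In h2 by linarith
  hence "Ai \<le> 2/m*(2/g0*Bo + 2/m*Bi)" by (rule half_div[OF gp(2)])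
  also have "\<dots> = (2/m)*(2/g0)*Bo + (2/m)*(2/m)*Bi" by (simp add: algebra_simps)
  also have "\<dots> \<le> (2/m0)*(2/g0)*Bo + (2/m0)*(2/m0)*Bi"
    using m m0 gp g0 Bo0 Bi0 by (intro add_mono mult_right_mono mult_mono divide_left_mono) auto
  finally have h3: "Ai \<le> 4/(m0*g0)*Bo + 4/m0^2*Bi" by (simp add: power2_eq_square)
  have p: "4/g0^2 \<ge> 0" "4/(m0*g0) \<ge> 0" "4/m0^2 \<ge> 0" using g0 m0 by auto
  have "4/g0^2*Bo + 4/(m0*g0)*Bo \<le> (4/g0^2 + 4/(m0*g0) + 4/m0^2) * Bo"
    using Bo0 p by (simp add: algebra_simps)
  moreover have "4/m0^2*Bi \<le> (4/g0^2 + 4/(m0*g0) + 4/m0^2) * Bi"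
    using Bi0 p by (simp add: algebra_simps)
  ultimately show ?thesis using h1 h3 by linarith
qed
theorem lemma13p1:
  fixes \<gamma>0 m0 :: real
  assumes "\<gamma>0 > 0" and "m0 > 0"
  shows "\<exists>C::real. \<forall>\<alpha> \<mu> \<gamma> :: real. \<forall>u u' :: real \<Rightarrow> real. \<forall>t::real.
    0 \<le> \<alpha> \<and> \<alpha> \<le> 2 \<and> 1 + \<mu> \<ge> m0 \<and> \<gamma> \<ge> \<gamma>0 \<and> C1_0_halfline u u' \<and> t \<ge> 0 \<longrightarrow>
    (LINT r:{0..t}|lborel. (u r)\<^sup>2 / (1 + \<bar>r - t\<bar>) powr (2 + \<mu>) * r\<^sup>2 / (1 + t + r) powr \<alpha>)
  + (LINT r:{t..}|lborel. (u r)\<^sup>2 / (1 + \<bar>r - t\<bar>) powr (1 - \<gamma>) * r\<^sup>2 / (1 + t + r) powr \<alpha>)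
  \<le> C * (LINT r:{0..t}|lborel. (u' r)\<^sup>2 / (1 + \<bar>r - t\<bar>) powr \<mu> * r\<^sup>2 / (1 + t + r) powr \<alpha>)
  + C * (LINT r:{t..}|lborel. (u' r)\<^sup>2 * (1 + \<bar>r - t\<bar>) powr (1 + \<gamma>) / (1 + t + r) powr \<alpha> * r\<^sup>2)"
  proof (intro exI[of _ "4/\<gamma>0^2 + 4/(m0*\<gamma>0) + 4/m0^2"] allI impI, elim conjE)
  fix \<alpha> \<mu> \<gamma> t :: real and u u' :: "real \<Rightarrow> real"
  assume a0: "0 \<le> \<alpha>" and a2: "\<alpha> \<le> 2" and m: "m0 \<le> 1 + \<mu>" and g: "\<gamma>0 \<le> \<gamma>"
    and C1: "C1_0_halfline u u'" and t0: "0 \<le> t"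
  have gp: "\<gamma> > 0" using g assms by linarith
  have mp: "1 + \<mu> > 0" using m assms by linarith
  show "(LINT r:{0..t}|lborel. (u r)\<^sup>2 / (1 + \<bar>r - t\<bar>) powr (2 + \<mu>) * r\<^sup>2 / (1 + t + r) powr \<alpha>)
  + (LINT r:{t..}|lborel. (u r)\<^sup>2 / (1 + \<bar>r - t\<bar>) powr (1 - \<gamma>) * r\<^sup>2 / (1 + t + r) powr \<alpha>)
  \<le> (4/\<gamma>0^2 + 4/(m0*\<gamma>0) + 4/m0^2) * (LINT r:{0..t}|lborel. (u' r)\<^sup>2 / (1 + \<bar>r - t\<bar>) powr \<mu> * r\<^sup>2 / (1 + t + r) powr \<alpha>)
  + (4/\<gamma>0^2 + 4/(m0*\<gamma>0) + 4/m0^2) * (LINT r:{t..}|lborel. (u' r)\<^sup>2 * (1 + \<bar>r - t\<bar>) powr (1 + \<gamma>) / (1 + t + r) powr \<alpha> * r\<^sup>2)"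
  proof (rule final_alg[OF assms g m outer[OF gp a0 a2 C1 t0] inner[OF mp a0 a2 C1 t0]])
    show "(u t)\<^sup>2 * (t\<^sup>2 * (1+t+t) powr (-\<alpha>)) \<ge> 0" by simp
  qed (rule lint_nonneg, simp)+
qed

end
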